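(* Assume Assumption (S) of the context holds. Then $\|M^*\|:=\sup_{\omega\in\mathbb V^k,\ \omega\not\equiv0}\frac{\|M^*\omega\|}{\|\omega\|}\le C$, where $C$ is a positive constant independent of the mesh $\{I_i\}$.
   Context: Let $\Omega=[a,b]$ be partitioned into finitely many cells $I_i=[x_{i-\frac12},x_{i+\frac12}]$ with sizes $h_i$, $h=\max_i h_i$, quasi-uniform ($h\le Ch_i$ for all $i$ with a fixed constant $C$). $\|\cdot\|$ is the $L^2(\Omega)$ norm, $(\cdot,\cdot)_{I_i}$ the $L^2(I_i)$ inner product. $\mathbb V^k=\{v\in L^2(\Omega): v|_{I_i}\in\mathbb P^k(I_i)\ \forall i\}$. Each $I_i$ has subdivision points $x_{i-\frac12}=x_{i,0}<x_{i,1}<\dots<x_{i,k}<x_{i,k+1}=x_{i+\frac12}$, control volumes $I_{i,j}=[x_{i,j},x_{i,j+1}]$, $j=0,\dots,k$, and $\mathbb V^{k,*}$ is the space of functions constant on each $I_{i,j}$. On each $I_i$ a quadrature $Q_i^k(v)=\sum_{j=0}^{k+1}A_{i,j}v(x_{i,j})$ is given with error $R_i^k(v)=\int_{I_i}v\,dx-Q_i^k(v)$, exact on $\mathbb P^{k-1}(I_i)$. $M^*:\mathbb V^k\to\mathbb V^{k,*}$ is defined cellwise: for $v=\omega|_{I_i}$, $(M^*\omega)|_{I_{i,0}}=v(x_{i-\frac12})+A_{i,0}v'(x_{i-\frac12})$ and $(M^*\omega)|_{I_{i,j}}-(M^*\omega)|_{I_{i,j-1}}=A_{i,j}v'(x_{i,j})$,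 $j=1,\dots,k$ (one-sided values from inside $I_i$). $L_{i,\ell}$ is the shifted Legendre polynomial of degree $\ell$ on $I_i$ with $L_{i,\ell}(x_{i+\frac12})=1$, $(L_{i,\ell},L_{i,m})_{I_i}=\delta_{\ell m}h_i/(2\ell+1)$. Assumption (S): $k\ge1$ and for every $i$, (1) $R_i^k(v)=0$ for all $v\in\mathbb P^{2k-1}(I_i)$, and (2) $\frac{h_i}{2k-1}-Q_i^k(L_{i,k+1}L_{i,k-1})>0$. *)

theory Defs
  imports "HOL-Analysis.Analysis" "HOL-Computational_Algebra.Polynomial"
begin

text \<open>Shifted Legendre polynomial of degree n on the reference interval [0,1],
  normalised so that its value at 1 equals 1.\<close>
definition shleg :: "nat \<Rightarrow> real \<Rightarrow> real" where
  "shleg n t = (\<Sum>j\<le>n. (-1) ^ (n + j) * real (n choose j) * real ((n + j) choose j) * t ^ j)"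

definition cell_leg :: "real \<Rightarrow> real \<Rightarrow> nat \<Rightarrow> real \<Rightarrow> real" where
  "cell_leg c h l x = shleg l ((x - c) / h)"

definition qnode :: "(nat \<Rightarrow> real) \<Rightarrow> real \<Rightarrow> real \<Rightarrow> nat \<Rightarrow> real" where
  "qnode xi c h j = c + h * xi j"

definition qweight :: "(nat \<Rightarrow> real) \<Rightarrow> real \<Rightarrow> nat \<Rightarrow> real" where
  "qweight w h j = h * w j"

definition quad :: "nat \<Rightarrow> (nat \<Rightarrow> real) \<Rightarrow> (nat \<Rightarrow> real) \<Rightarrow> real \<Rightarrow> real \<Rightarrow> (real \<Rightarrow> real) \<Rightarrow> real" where
  "quad k xi w c h v = (\<Sum>j\<le>k + 1. qweight w h j * v (qnode xi c h j))"

definition assumption_S :: "nat \<Rightarrow> (nat \<Rightarrow> real) \<Rightarrow> (nat \<Rightarrow> real) \<Rightarrow> bool" where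
  "assumption_S k xi w \<longleftrightarrow> k \<ge> 1 \<and>
     (\<forall>c h. h > 0 \<longrightarrow>
        (\<forall>v :: real poly. degree v \<le> 2 * k - 1 \<longrightarrow>
            integral {c..c + h} (poly v) - quad k xi w c h (poly v) = 0)
      \<and> h / real (2 * k - 1)
          - quad k xi w c h (\<lambda>x. cell_leg c h (k + 1) x * cell_leg c h (k - 1) x) > 0)"

text \<open>Values of M^* omega on the control volumes I_{i,0}, ..., I_{i,k} of a cell,
  where v is the polynomial omega restricted to the cell, y the nodes and A the weights.\<close>
fun mstar_val :: "real poly \<Rightarrow> (nat \<Rightarrow> real) \<Rightarrow> (nat \<Rightarrow> real) \<Rightarrow> nat \<Rightarrow> real" where
  "mstar_val v y A 0 = poly v (y 0) + A 0 * poly (pderiv v) (y 0)"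
| "mstar_val v y A (Suc j) = mstar_val v y A j + A (Suc j) * poly (pderiv v) (y (Suc j))"

text \<open>Mesh: breakpoints x_0 < x_1 < ... < x_N, cells I_i = [x_i, x_{i+1}], i < N.\<close>
definition cell_size :: "(nat \<Rightarrow> real) \<Rightarrow> nat \<Rightarrow> real" where
  "cell_size x i = x (Suc i) - x i"

definition mesh_size :: "nat \<Rightarrow> (nat \<Rightarrow> real) \<Rightarrow> real" where
  "mesh_size N x = Max (cell_size x ` {..<N})"

definition quasi_uniform :: "real \<Rightarrow> nat \<Rightarrow> (nat \<Rightarrow> real) \<Rightarrow> bool" where
  "quasi_uniform Cq N x \<longleftrightarrow> (\<forall>i<N. mesh_size N x \<le> Cq * cell_size x i)"

text \<open>L^2 norm of omega in V^k, omega given cellwise by polynomials p i on cell i.\<close>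
definition L2norm_pw :: "nat \<Rightarrow> (nat \<Rightarrow> real) \<Rightarrow> (nat \<Rightarrow> real poly) \<Rightarrow> real" where
  "L2norm_pw N x p = sqrt (\<Sum>i<N. integral {x i..x (Suc i)} (\<lambda>t. (poly (p i) t)\<^sup>2))"

text \<open>L^2 norm of M^* omega: on cell i, M^* omega is constant on I_{i,j} = [x_{i,j}, x_{i,j+1}].\<close>
definition Mstar_norm :: "nat \<Rightarrow> (nat \<Rightarrow> real) \<Rightarrow> (nat \<Rightarrow> real) \<Rightarrow> nat \<Rightarrow> (nat \<Rightarrow> real) \<Rightarrow> (nat \<Rightarrow> real poly) \<Rightarrow> real" where
  "Mstar_norm k xi w N x p = sqrt (\<Sum>i<N. \<Sum>j\<le>k.
      (mstar_val (p i) (qnode xi (x i) (cell_size x i)) (qweight w (cell_size x i)) j)\<^sup>2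
      * (qnode xi (x i) (cell_size x i) (Suc j) - qnode xi (x i) (cell_size x i) j))"

end

theory Submission
  imports Defs
begin


definition PA :: "nat \<Rightarrow> (nat \<Rightarrow> real) \<Rightarrow> real poly" where
  "PA k a = (\<Sum>i\<le>k. monom (a i) i)"
definition Mq :: "nat \<Rightarrow> (nat \<Rightarrow> real) \<Rightarrow> (nat \<Rightarrow> real) \<Rightarrow> real poly \<Rightarrow> real" where
  "Mq k xi w q = (\<Sum>j\<le>k. (mstar_val q xi w j)\<^sup>2 * (xi (Suc j) - xi j))"
definition Fq :: "real poly \<Rightarrow> real" where
  "Fq q = integral {0..1} (\<lambda>t. (poly q t)\<^sup>2)"

lemma mstar_closed: "mstar_val v y A j = poly v (y 0) + (\<Sum>l\<le>j. A l * poly (pderiv v) (y l))"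
  by (induction j) auto

lemma mstar_smult: "mstar_val (smult c v) y A j = c * mstar_val v y A j"
  by (induction j) (auto simp: pderiv_smult algebra_simps)

lemma mstar_zero: "mstar_val 0 y A j = 0"
  using mstar_smult[of 0 0] by simp

lemma Mq_smult: "Mq k xi w (smult c q) = c\<^sup>2 * Mq k xi w q"
  unfolding Mq_def mstar_smult by (simp add: sum_distrib_left power_mult_distrib algebra_simps)

lemma Fq_smult: "Fq (smult c q) = c\<^sup>2 * Fq q"
  unfolding Fq_def by (simp add: power_mult_distrib)

lemma poly_PA: "poly (PA k a) t = (\<Sum>i\<le>k. a i * t ^ i)"
  unfolding PA_def by (simp add: poly_sum poly_monom)

lemma pderiv_sum': "pderiv (\<Sum>i\<in>A. f i) = (\<Sum>i\<in>A. pderiv (f i))"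
  by (induction A rule: infinite_finite_induct) (auto simp: pderiv_add)

lemma pderiv_PA: "poly (pderiv (PA k a)) t = (\<Sum>i\<le>k. a i * (of_nat i * t ^ (i - 1)))"
  unfolding PA_def by (simp add: pderiv_sum' pderiv_monom poly_sum poly_monom algebra_simps)

lemma Mq_PA: "Mq k xi w (PA k a) = (\<Sum>j\<le>k. ((\<Sum>i\<le>k. a i * xi 0 ^ i) + (\<Sum>l\<le>j. w l * (\<Sum>i\<le>k. a i * (of_nat i * xi l ^ (i - 1)))))\<^sup>2 * (xi (Suc j) - xi j))"
  unfolding Mq_def mstar_closed poly_PA pderiv_PA ..

lemma cont_Mq: "continuous_on UNIV (\<lambda>a. Mq k xi w (PA k a))"
  unfolding Mq_PA by (intro continuous_intros) auto

lemma Fq_PA: "Fq (PA k a) = (\<Sum>i\<le>k. \<Sum>i'\<le>k. a i * a i' * integral {0..1} (\<lambda>t. t ^ (i + i')))"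
proof -
  have e: "(poly (PA k a) t)\<^sup>2 = (\<Sum>i\<le>k. \<Sum>i'\<le>k. a i * a i' * t ^ (i + i'))" for t
    unfolding poly_PA power2_eq_square sum_product by (simp add: power_add algebra_simps)
  show ?thesis unfolding Fq_def e
    by (simp add: integral_sum integrable_continuous_interval continuous_intros integrable_sum)
qed

lemma cont_Fq: "continuous_on UNIV (\<lambda>a. Fq (PA k a))"
  unfolding Fq_PA by (intro continuous_intros) auto



definition Kset :: "nat \<Rightarrow> (nat \<Rightarrow> real) set" where
  "Kset k = Pi UNIV (\<lambda>m. if m \<le> k then {-1..1} else {0}) \<inter> {a. (\<Sum>i\<le>k. (a i)\<^sup>2) = 1}"

lemma compact_Kset: "compact (Kset k)"
proof -
  have "compactin (product_topology (\<lambda>_. euclidean) UNIV) (PiE UNIV (\<lambda>m::nat. if m \<le> k then {-1..1::real} else {0}))"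
    by (subst compactin_PiE) (auto simp: compactin_euclidean_iff)
  then have "compact (Pi UNIV (\<lambda>m::nat. if m \<le> k then {-1..1::real} else {0}))"
    by (simp add: euclidean_product_topology compactin_euclidean_iff PiE_UNIV_domain)
  moreover have "closed {a::nat\<Rightarrow>real. (\<Sum>i\<le>k. (a i)\<^sup>2) = 1}"
    by (intro closed_Collect_eq continuous_intros) auto
  ultimately show ?thesis unfolding Kset_def by (rule compact_Int_closed)
qed

lemma Kset_ne: "(\<lambda>m. if m = 0 then 1 else 0) \<in> Kset k"
  unfolding Kset_def by (auto simp: power2_eq_square if_distrib sum.delta cong: if_cong)

lemma coeff_PA: "i \<le> k \<Longrightarrow> coeff (PA k a) i = a i"
  unfolding PA_def by (rule coeff_sum_monom)

lemma Fq_nonneg: "Fq q \<ge> 0"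
  unfolding Fq_def by (intro integral_nonneg integrable_continuous_interval continuous_intros) auto

lemma Fq_pos: assumes "q \<noteq> 0" shows "Fq q > 0"
proof -
  have "Fq q \<noteq> 0"
  proof
    assume "Fq q = 0"
    then have "integral (cbox 0 1) (\<lambda>t. (poly q t)\<^sup>2) = 0" by (simp add: Fq_def)
    then have "\<forall>t\<in>cbox 0 (1::real). (poly q t)\<^sup>2 = 0"
      by (subst (asm) integral_cbox_eq_0_iff) (auto intro!: continuous_intros)
    then have "{0..1::real} \<subseteq> {t. poly q t = 0}" by auto
    moreover have "infinite {0..1::real}" by (simp add: infinite_Icc)
    ultimately have "infinite {t. poly q t = 0}" using finite_subset by blast
    with poly_roots_finite assms show False by blast
  qed
  with Fq_nonneg[of q] show ?thesis by linarith
qed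

lemma PA_nonzero: assumes "a \<in> Kset k" shows "PA k a \<noteq> 0"
proof
  assume "PA k a = 0"
  then have "\<forall>i\<le>k. a i = 0" using coeff_PA by (metis coeff_0)
  then show False using assms by (simp add: Kset_def)
qed

lemma smult_sum_right: "smult c (\<Sum>i\<in>A. f i) = (\<Sum>i\<in>A. smult c (f i))"
  by (induction A rule: infinite_finite_induct) (auto simp: smult_add_right)

lemma cell_bound:
  "\<exists>B>0. \<forall>q. degree q \<le> k \<longrightarrow> Mq k xi w q \<le> B * Fq q"
proof -
  obtain M where M: "\<And>a. a \<in> Kset k \<Longrightarrow> Mq k xi w (PA k a) \<le> M"
    using continuous_attains_sup[OF compact_Kset _ continuous_on_subset[OF cont_Mq]] Kset_ne by blast
  obtain a0 where a0: "a0 \<in> Kset k" "\<And>a. a \<in> Kset k \<Longrightarrow> Fq (PA k a0) \<le> Fq (PA k a)"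
    using continuous_attains_inf[OF compact_Kset _ continuous_on_subset[OF cont_Fq]] Kset_ne by blast
  define F0 where "F0 = Fq (PA k a0)"
  have F0: "F0 > 0" unfolding F0_def using Fq_pos PA_nonzero a0 by blast
  define B where "B = max 1 (max M 0 / F0)"
  have B: "B > 0" unfolding B_def by simp
  have KB: "Mq k xi w (PA k a) \<le> B * Fq (PA k a)" if "a \<in> Kset k" for a
  proof -
    have "Mq k xi w (PA k a) \<le> max M 0" using M that by fastforce
    also have "\<dots> = (max M 0 / F0) * F0" using F0 by simp
    also have "\<dots> \<le> B * Fq (PA k a)"
      using a0(2)[OF that] F0 unfolding F0_def[symmetric] B_def
      by (intro mult_mono) auto
    finally show ?thesis .
  qed
  have "Mq k xi w q \<le> B * Fq q" if dq: "degree q \<le> k" for q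
  proof (cases "q = 0")
    case True
    then show ?thesis using Mq_smult[of k xi w 0 0] Fq_smult[of 0 0] by simp
  next
    case False
    define s where "s = sqrt (\<Sum>i\<le>k. (coeff q i)\<^sup>2)"
    have "\<exists>i\<le>k. coeff q i \<noteq> 0" using False dq
      by (metis le_degree leading_coeff_0_iff order.refl)
    then obtain i0 where i0: "i0 \<le> k" "coeff q i0 \<noteq> 0" by blast
    have "(coeff q i0)\<^sup>2 \<le> (\<Sum>i\<le>k. (coeff q i)\<^sup>2)"
      using i0 by (intro member_le_sum) auto
    moreover have "(coeff q i0)\<^sup>2 > 0" using i0 by simp
    ultimately have ss: "(\<Sum>i\<le>k. (coeff q i)\<^sup>2) > 0" by linarith
    then have s: "s > 0" unfolding s_def by simp
    have s2: "s\<^sup>2 = (\<Sum>i\<le>k. (coeff q i)\<^sup>2)" unfolding s_def using ss by simp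
    define a where "a = (\<lambda>i. if i \<le> k then coeff q i / s else 0)"
    have suma: "(\<Sum>i\<le>k. (a i)\<^sup>2) = 1"
      using s s2 ss by (simp add: a_def power_divide sum_divide_distrib[symmetric])
    have "a \<in> Kset k"
      unfolding Kset_def
    proof (intro IntI CollectI Pi_I)
      show "(\<Sum>i\<le>k. (a i)\<^sup>2) = 1" by (rule suma)
      fix i assume "i \<in> (UNIV :: nat set)"
      show "a i \<in> (if i \<le> k then {-1..1} else {0})"
      proof (cases "i \<le> k")
        case True
        have "(a i)\<^sup>2 \<le> 1" using suma True by (metis member_le_sum atMost_iff finite_atMost zero_le_power2)
        then have "\<bar>a i\<bar> \<le> 1" by (simp add: abs_square_le_1)
        then show ?thesis using True by auto
      qed (auto simp: a_def)
    qed
    have "q = (\<Sum>i\<le>k. monom (coeff q i) i)" using poly_as_sum_of_monoms'[OF dq] by simp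
    also have "\<dots> = smult s (PA k a)"
      unfolding PA_def a_def using s by (simp add: smult_sum_right smult_monom)
    finally have qe: "q = smult s (PA k a)" .
    show ?thesis
      using KB[OF \<open>a \<in> Kset k\<close>] unfolding qe Mq_smult Fq_smult
      by (metis mult_left_mono zero_le_power2 mult.assoc mult.commute)
  qed
  with B show ?thesis by blast
qed



lemma poly_pderiv_scale:
  "poly (pderiv (pcompose p [:c, h:])) t = poly (pderiv p) (c + h * t) * h"
  by (simp add: pderiv_pcompose poly_pcompose pderiv_pCons algebra_simps)

lemma mstar_scale:
  "mstar_val p (qnode xi c h) (qweight w h) j = mstar_val (pcompose p [:c, h:]) xi w j"
  by (induction j) (auto simp: poly_pderiv_scale qnode_def qweight_def poly_pcompose algebra_simps)

lemma cell_sum: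
  "(\<Sum>j\<le>k. (mstar_val p (qnode xi c h) (qweight w h) j)\<^sup>2 * (qnode xi c h (Suc j) - qnode xi c h j))
   = h * Mq k xi w (pcompose p [:c, h:])"
  unfolding Mq_def mstar_scale by (simp add: sum_distrib_left qnode_def algebra_simps)

lemma cell_int:
  assumes h: "h > 0"
  shows "integral {c..c + h} (\<lambda>t. (poly p t)\<^sup>2) = h * Fq (pcompose p [:c, h:])"
proof -
  define I where "I = integral {c..c + h} (\<lambda>t. (poly p t)\<^sup>2)"
  have "((\<lambda>t. (poly p t)\<^sup>2) has_integral I) (cbox c (c + h))"
    unfolding I_def by (simp add: integrable_integral integrable_continuous_interval continuous_intros)
  from has_integral_affinity'[OF this h, of c]
  have "((\<lambda>t. (poly p (h * t + c))\<^sup>2) has_integral I / h) (cbox 0 1)"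
    using h by (simp add: divide_inverse mult.commute)
  then have "Fq (pcompose p [:c, h:]) = I / h"
    unfolding Fq_def by (simp add: poly_pcompose algebra_simps integral_unique)
  then show ?thesis using h unfolding I_def by simp
qed



theorem proposition3p8:
  fixes k :: nat and xi w :: "nat \<Rightarrow> real" and Cq :: real
  assumes nodes0: "xi 0 = 0" and nodes1: "xi (k + 1) = 1"
    and nodes_mono: "strict_mono_on {0..k + 1} xi"
    and S: "assumption_S k xi w"
  shows "\<exists>C > 0. \<forall>N (x :: nat \<Rightarrow> real) (p :: nat \<Rightarrow> real poly).
           N \<ge> 1 \<longrightarrow> strict_mono_on {0..N} x \<longrightarrow> quasi_uniform Cq N x
           \<longrightarrow> (\<forall>i<N. degree (p i) \<le> k)
           \<longrightarrow> Mstar_norm k xi w N x p \<le> C * L2norm_pw N x p"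
proof -
  obtain B where B: "B > 0" "\<And>q. degree q \<le> k \<Longrightarrow> Mq k xi w q \<le> B * Fq q"
    using cell_bound[of k xi w] by blast
  have "Mstar_norm k xi w N x p \<le> sqrt B * L2norm_pw N x p"
    if mono: "strict_mono_on {0..N} x" and deg: "\<forall>i<N. degree (p i) \<le> k" for N x p
  proof -
    have "(\<Sum>j\<le>k. (mstar_val (p i) (qnode xi (x i) (cell_size x i)) (qweight w (cell_size x i)) j)\<^sup>2
      * (qnode xi (x i) (cell_size x i) (Suc j) - qnode xi (x i) (cell_size x i) j))
      \<le> B * integral {x i..x (Suc i)} (\<lambda>t. (poly (p i) t)\<^sup>2)" if i: "i < N" for i
    proof -
      define h where "h = cell_size x i"
      have h: "h > 0" unfolding h_def cell_size_def
        using mono i by (simp add: strict_mono_on_def)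
      have xs: "x (Suc i) = x i + h" unfolding h_def cell_size_def by simp
      have dq: "degree (pcompose (p i) [:x i, h:]) \<le> k"
      proof -
        have "degree [:x i, h:] \<le> 1" by simp
        then have "degree (p i) * degree [:x i, h:] \<le> degree (p i)"
          using mult_le_mono2[of "degree [:x i, h:]" 1 "degree (p i)"] by simp
        then show ?thesis using degree_pcompose_le[of "p i" "[:x i, h:]"] deg i
          using le_trans by blast
      qed
      have "h * Mq k xi w (pcompose (p i) [:x i, h:]) \<le> h * (B * Fq (pcompose (p i) [:x i, h:]))"
        using B(2)[OF dq] h by simp
      then show ?thesis
        unfolding h_def[symmetric] cell_sum xs cell_int[OF h] by (simp add: algebra_simps)
    qed
    then have "(\<Sum>i<N. \<Sum>j\<le>k.
      (mstar_val (p i) (qnode xi (x i) (cell_size x i)) (qweight w (cell_size x i)) j)\<^sup>2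
      * (qnode xi (x i) (cell_size x i) (Suc j) - qnode xi (x i) (cell_size x i) j))
      \<le> B * (\<Sum>i<N. integral {x i..x (Suc i)} (\<lambda>t. (poly (p i) t)\<^sup>2))"
      unfolding sum_distrib_left by (intro sum_mono) auto
    then have "Mstar_norm k xi w N x p \<le> sqrt (B * (\<Sum>i<N. integral {x i..x (Suc i)} (\<lambda>t. (poly (p i) t)\<^sup>2)))"
      unfolding Mstar_norm_def by (rule real_sqrt_le_mono)
    then show ?thesis unfolding L2norm_pw_def by (simp add: real_sqrt_mult)
  qed
  then show ?thesis using B(1) by (intro exI[of _ "sqrt B"]) auto
qed


end
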